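(* Let $N\ge2$, $k>0$, and $g(s)=|s|^{p-1}s$ with $p\ge\frac{N+1}{N-1}$. Then the problem $$-\Delta u+g(u)=2k\frac{\partial\delta_0}{\partial x_N}\ \text{ in } B_1(0),\qquad u=0\ \text{ on }\partial B_1(0)$$ has no $x_N$-odd very weak solution.
   Context: $B_1(0)$ is the open unit ball of $\mathbb{R}^N$. $\frac{\partial\delta_0}{\partial x_N}$ is the distribution $\langle\frac{\partial\delta_0}{\partial x_N},\zeta\rangle=\frac{\partial\zeta(0)}{\partial x_N}$. A function $u$ is $x_N$-odd if $u(x',x_N)=-u(x',-x_N)$. A function $u\in L^1(B_1(0))$ is a very weak solution if $g(u)$ is integrable in the principal value sense near the origin (i.e. $\lim_{\epsilon\to0^+}\int_{B_1(0)\setminus B_\epsilon(0)}g(u)\,dx$ exists), $g(u)\in L^1(B_1(0),|x|dx)$, and $\int_{B_1(0)}[u(-\Delta\xi)+g(u)\xi]\,dx=2k\frac{\partial\xi(0)}{\partial x_N}$ for all $\xi\in C^{1,1}_0(B_1(0))$. *)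

theory Defs
  imports "HOL-Analysis.Analysis"
begin

definition gpow :: "real \<Rightarrow> real \<Rightarrow> real" where
  "gpow p s = \<bar>s\<bar> powr (p - 1) * s"

definition pdiff :: "('a::euclidean_space \<Rightarrow> real) \<Rightarrow> 'a \<Rightarrow> 'a \<Rightarrow> real" where
  "pdiff f e x = frechet_derivative f (at x) e"

text \<open>Laplacian (sum of pure second partials); for C^{1,1} functions it is
  defined almost everywhere, which suffices inside Lebesgue integrals.\<close>
definition laplacian :: "('a::euclidean_space \<Rightarrow> real) \<Rightarrow> 'a \<Rightarrow> real" where
  "laplacian f x = (\<Sum>b\<in>Basis. pdiff (pdiff f b) b x)"

text \<open>C^{1,1}_0(B_1(0)): continuous on the closed ball, differentiable in the open
  ball with Lipschitz (hence uniformly continuous up to the boundary) first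
  derivatives, and vanishing on the boundary sphere.\<close>
definition C11_0_ball :: "('a::euclidean_space \<Rightarrow> real) \<Rightarrow> bool" where
  "C11_0_ball \<xi> \<longleftrightarrow>
     continuous_on (cball 0 1) \<xi> \<and>
     (\<forall>x\<in>ball 0 1. \<xi> differentiable (at x)) \<and>
     (\<exists>L. \<forall>b\<in>Basis. L-lipschitz_on (ball 0 1) (pdiff \<xi> b)) \<and>
     (\<forall>x\<in>sphere 0 1. \<xi> x = 0)"

definition reflect :: "'a::euclidean_space \<Rightarrow> 'a \<Rightarrow> 'a" where
  "reflect eN x = x - (2 * (x \<bullet> eN)) *\<^sub>R eN"

definition xN_odd :: "'a::euclidean_space \<Rightarrow> ('a \<Rightarrow> real) \<Rightarrow> bool" where
  "xN_odd eN u \<longleftrightarrow> (\<forall>x. u (reflect eN x) = - u x)"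

text \<open>The integral of g(u) xi is understood in the principal value sense
  (limit over B_1 \ B_eps), as required by the definition.\<close>
definition very_weak_solution ::
  "real \<Rightarrow> real \<Rightarrow> 'a::euclidean_space \<Rightarrow> ('a \<Rightarrow> real) \<Rightarrow> bool" where
  "very_weak_solution p k eN u \<longleftrightarrow>
     set_integrable lborel (ball 0 1) u \<and>
     (\<exists>I. ((\<lambda>\<epsilon>. set_lebesgue_integral lborel (ball 0 1 - ball 0 \<epsilon>) (\<lambda>x. gpow p (u x)))
            \<longlongrightarrow> I) (at_right 0)) \<and>
     set_integrable lborel (ball 0 1) (\<lambda>x. norm x * gpow p (u x)) \<and>
     (\<forall>\<xi>. C11_0_ball \<xi> \<longrightarrow>
        ((\<lambda>\<epsilon>. set_lebesgue_integral lborel (ball 0 1 - ball 0 \<epsilon>)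
                 (\<lambda>x. u x * (- laplacian \<xi> x) + gpow p (u x) * \<xi> x))
          \<longlongrightarrow> 2 * k * pdiff \<xi> eN 0) (at_right 0))"

end

theory Submission
  imports Defs
begin

lemma piece_deriv:
  fixes f f' :: "real \<Rightarrow> real"
  assumes d: "\<And>x. (f has_real_derivative f' x) (at x)" and f1: "f 1 = 0" and f1': "f' 1 = 0"
  shows "((\<lambda>t. if t < 1 then f t else 0) has_real_derivative (if t < 1 then f' t else 0)) (at t)"
proof -
  have dd: "\<And>x. (f has_derivative (\<lambda>h. h * f' x)) (at x)"
  proof -
    fix x have "(\<lambda>h. h * f' x) = (*) (f' x)" by (auto simp: mult.commute)
    then show "(f has_derivative (\<lambda>h. h * f' x)) (at x)" using d[of x] unfolding has_field_derivative_def by simp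
  qed
  have e1: "(\<lambda>t. if t < 1 then f t else 0) = (\<lambda>t. if t \<in> {..<1} then f t else 0)" by auto
  have cl: "closure {..<(1::real)} = {..1}" "closure {(1::real)..} = {1..}" by auto
  have "((\<lambda>t. if t \<in> {..<1} then f t else 0) has_derivative
      (if t \<in> {..<1} then (\<lambda>h. h * f' t) else (\<lambda>h. 0))) (at t within ({..<1} \<union> {1..}))"
    apply (rule has_derivative_If_within_closures)
    using dd f1' 
    by (auto simp: cl f1 intro: has_derivative_at_withinI)
  moreover have "{..<(1::real)} \<union> {1..} = UNIV" by auto
  ultimately show ?thesis unfolding has_field_derivative_def e1
    by (auto split: if_splits elim!: has_derivative_eq_rhs simp: fun_eq_iff)
qed
definition phi0 :: "real \<Rightarrow> real" where "phi0 t = (if t < 1 then (1-t)^3 else 0)"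
definition phi1 :: "real \<Rightarrow> real" where "phi1 t = (if t < 1 then -3*(1-t)^2 else 0)"
definition phi2 :: "real \<Rightarrow> real" where "phi2 t = (if t < 1 then 6*(1-t) else 0)"

lemma phi0_deriv: "(phi0 has_real_derivative phi1 t) (at t)"
proof -
  have "((\<lambda>t. if t < 1 then (1-t)^3 else 0) has_real_derivative (if t < 1 then -3*(1-t)^2 else 0)) (at t)"
    by (rule piece_deriv) (auto intro!: derivative_eq_intros)
  then show ?thesis unfolding phi0_def[abs_def] phi1_def .
qed

lemma phi1_deriv: "(phi1 has_real_derivative phi2 t) (at t)"
proof -
  have "((\<lambda>t. if t < 1 then -3*(1-t)^2 else 0) has_real_derivative (if t < 1 then 6*(1-t) else 0)) (at t)"
    by (rule piece_deriv) (auto intro!: derivative_eq_intros)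
  then show ?thesis unfolding phi1_def[abs_def] phi2_def .
qed

lemma phi_bounds:
  assumes "t \<ge> 0"
  shows "\<bar>phi0 t\<bar> \<le> 1" "\<bar>phi1 t\<bar> \<le> 3" "\<bar>phi2 t\<bar> \<le> 6"
proof -
  show "\<bar>phi0 t\<bar> \<le> 1"
  proof (cases "t < 1")
    case True
    then have "0 \<le> 1 - t" "1 - t \<le> 1" using assms by auto
    then have "(1-t)^3 \<le> 1" by (simp add: power_le_one)
    moreover have "0 \<le> (1-t)^3" using \<open>0 \<le> 1 - t\<close> by simp
    ultimately show ?thesis using True by (simp add: phi0_def)
  qed (simp add: phi0_def)
  show "\<bar>phi1 t\<bar> \<le> 3"
  proof (cases "t < 1")
    case True
    then have "0 \<le> 1 - t" "1 - t \<le> 1" using assms by auto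
    then have "(1-t)^2 \<le> 1" by (simp add: power_le_one)
    moreover have "0 \<le> (1-t)^2" by simp
    ultimately show ?thesis using True by (simp add: phi1_def)
  qed (simp add: phi1_def)
  show "\<bar>phi2 t\<bar> \<le> 6"
    using assms by (simp add: phi2_def)
qed

lemma phi_zero: "t \<ge> 1 \<Longrightarrow> phi0 t = 0 \<and> phi1 t = 0 \<and> phi2 t = 0"
  by (simp add: phi0_def phi1_def phi2_def)
definition qf :: "real \<Rightarrow> 'a::euclidean_space \<Rightarrow> real" where "qf r x = (x \<bullet> x) / r^2"
definition xi :: "real \<Rightarrow> 'a::euclidean_space \<Rightarrow> 'a \<Rightarrow> real" where
  "xi r e x = (x \<bullet> e) * phi0 (qf r x)"
definition GG :: "real \<Rightarrow> 'a::euclidean_space \<Rightarrow> 'a \<Rightarrow> 'a \<Rightarrow> real" where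
  "GG r e b x = (b \<bullet> e) * phi0 (qf r x) + (x \<bullet> e) * (phi1 (qf r x) * (2 * (x \<bullet> b) / r^2))"
definition HH :: "real \<Rightarrow> 'a::euclidean_space \<Rightarrow> 'a \<Rightarrow> 'a \<Rightarrow> 'a \<Rightarrow> real" where
  "HH r e b x h = (b \<bullet> e) * (phi1 (qf r x) * (2 * (x \<bullet> h) / r^2))
     + (h \<bullet> e) * (phi1 (qf r x) * (2 * (x \<bullet> b) / r^2))
     + (x \<bullet> e) * (phi2 (qf r x) * (2 * (x \<bullet> h) / r^2) * (2 * (x \<bullet> b) / r^2)
                    + phi1 (qf r x) * (2 * (h \<bullet> b) / r^2))"

lemma qf_deriv: "(qf r has_derivative (\<lambda>h. 2 * (x \<bullet> h) / r^2)) (at x)"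
proof (cases "r = 0")
  case True
  then show ?thesis unfolding qf_def[abs_def] by simp
next
  case False
  then show ?thesis unfolding qf_def[abs_def]
  by (auto intro!: derivative_eq_intros simp: inner_commute add_divide_distrib power2_eq_square power4_eq_xxxx fun_eq_iff)
qed

lemma comp_deriv:
  assumes "\<And>t. (f has_real_derivative f' t) (at t)"
  shows "((\<lambda>x. f (qf r x)) has_derivative (\<lambda>h. f' (qf r x) * (2 * (x \<bullet> h) / r^2))) (at x)"
  using has_derivative_compose[OF qf_deriv assms[unfolded has_field_derivative_def]] .

lemma xi_deriv: "(xi r e has_derivative (\<lambda>h. GG r e h x)) (at x)"
  unfolding xi_def[abs_def] GG_def
  by (rule derivative_eq_intros comp_deriv phi0_deriv | simp)+ (simp add: fun_eq_iff algebra_simps)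

lemma GG_deriv: assumes "r \<noteq> 0" shows "(GG r e b has_derivative HH r e b x) (at x)"
  unfolding GG_def[abs_def] HH_def[abs_def]
  apply (rule derivative_eq_intros comp_deriv phi0_deriv phi1_deriv | simp)+
  using assms by (auto simp add: fun_eq_iff algebra_simps)
lemma abs_prod_le:
  fixes a b A B :: real
  assumes "\<bar>a\<bar> \<le> A" "\<bar>b\<bar> \<le> B"
  shows "\<bar>a * b\<bar> \<le> A * B"
  using assms by (simp add: abs_mult mult_mono')

lemma div_le2:
  fixes B X r :: real
  assumes "\<bar>B\<bar> \<le> X" "r > 0"
  shows "\<bar>2 * B / r^2\<bar> \<le> 2 * X / r^2"
  using assms by (simp add: abs_divide abs_mult divide_right_mono)

lemma abs4: fixes w x y z :: real shows "\<bar>w + x + y + z\<bar> \<le> \<bar>w\<bar> + \<bar>x\<bar> + \<bar>y\<bar> + \<bar>z\<bar>"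
  by linarith

lemma real_bound42:
  fixes A B C D E F p1 p2 nx nh r :: real
  assumes "\<bar>A\<bar> \<le> 1" "\<bar>B\<bar> \<le> nx * nh" "\<bar>C\<bar> \<le> nh" "\<bar>D\<bar> \<le> nx" "\<bar>E\<bar> \<le> nx" "\<bar>F\<bar> \<le> nh"
    "\<bar>p1\<bar> \<le> 3" "\<bar>p2\<bar> \<le> 6" "nx^2 \<le> r^2" "r > 0" "nx \<ge> 0" "nh \<ge> 0"
  shows "\<bar>A * (p1 * (2 * B / r^2)) + C * (p1 * (2 * D / r^2))
          + E * (p2 * (2 * B / r^2) * (2 * D / r^2) + p1 * (2 * F / r^2))\<bar>
        \<le> 42 * nx * nh / r^2"
proof -
  have r2: "r^2 > 0" using assms by simp
  have t1: "\<bar>A * (p1 * (2 * B / r^2))\<bar> \<le> 1 * (3 * (2 * (nx*nh) / r^2))"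
    by (intro abs_prod_le div_le2 assms)
  have t2: "\<bar>C * (p1 * (2 * D / r^2))\<bar> \<le> nh * (3 * (2 * nx / r^2))"
    by (intro abs_prod_le div_le2 assms)
  have BD: "\<bar>B * D\<bar> \<le> (nx*nh) * nx" by (intro abs_prod_le assms)
  have "nx * nh * nx * nx \<le> nh * nx * r^2"
  proof -
    have "nx * nh * nx * nx = (nh * nx) * nx^2" by (simp add: power2_eq_square)
    also have "\<dots> \<le> (nh*nx) * r^2" using assms by (intro mult_left_mono) auto
    finally show ?thesis by simp
  qed
  have t3: "\<bar>E * (p2 * (2 * B / r^2) * (2 * D / r^2))\<bar> \<le> 24 * nx * nh / r^2"
  proof -
    have "E * (p2 * (2 * B / r^2) * (2 * D / r^2)) = 4 * (E * p2 * (B * D)) / (r^2 * r^2)"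
      by (simp add: field_simps)
    moreover have "\<bar>E * p2 * (B * D)\<bar> \<le> nx * 6 * ((nx*nh) * nx)"
      by (intro abs_prod_le assms BD)
    moreover have "nx * 6 * ((nx*nh) * nx) \<le> 6 * (nh * nx * r^2)"
      using \<open>nx * nh * nx * nx \<le> nh * nx * r^2\<close> by (simp add: algebra_simps)
    ultimately have "\<bar>E * p2 * (B * D)\<bar> \<le> 6 * (nh * nx * r^2)" by linarith
    then have "\<bar>4 * (E * p2 * (B * D)) / (r^2 * r^2)\<bar> \<le> 4 * (6 * (nh * nx * r^2)) / (r^2 * r^2)"
    proof -
      have "\<bar>4 * (E * p2 * (B * D)) / (r^2 * r^2)\<bar> = 4 * \<bar>E * p2 * (B * D)\<bar> / (r^2 * r^2)"
        by (simp add: abs_divide abs_mult)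
      also have "\<dots> \<le> 4 * (6 * (nh * nx * r^2)) / (r^2 * r^2)"
        using \<open>\<bar>E * p2 * (B * D)\<bar> \<le> 6 * (nh * nx * r^2)\<close> r2
        by (intro divide_right_mono) auto
      finally show ?thesis .
    qed
    then have "\<bar>E * (p2 * (2 * B / r^2) * (2 * D / r^2))\<bar> \<le> 4 * (6 * (nh * nx * r^2)) / (r^2 * r^2)"
      using \<open>E * (p2 * (2 * B / r^2) * (2 * D / r^2)) = 4 * (E * p2 * (B * D)) / (r^2 * r^2)\<close> by (simp only:)
    also have "\<dots> = 24 * nx * nh / r^2" using r2 by (simp add: field_simps)
    finally show ?thesis .
  qed
  have t4: "\<bar>E * (p1 * (2 * F / r^2))\<bar> \<le> nx * (3 * (2 * nh / r^2))"
    by (intro abs_prod_le div_le2 assms)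
  have "\<bar>A * (p1 * (2 * B / r^2)) + C * (p1 * (2 * D / r^2))
          + E * (p2 * (2 * B / r^2) * (2 * D / r^2) + p1 * (2 * F / r^2))\<bar>
       \<le> \<bar>A * (p1 * (2 * B / r^2))\<bar> + \<bar>C * (p1 * (2 * D / r^2))\<bar>
          + \<bar>E * (p2 * (2 * B / r^2) * (2 * D / r^2))\<bar> + \<bar>E * (p1 * (2 * F / r^2))\<bar>"
    unfolding distrib_left add.assoc[symmetric] by (rule abs4)
  also have "\<dots> \<le> 1 * (3 * (2 * (nx*nh) / r^2)) + nh * (3 * (2 * nx / r^2)) + 24 * nx * nh / r^2 + nx * (3 * (2 * nh / r^2))"
    using t1 t2 t3 t4 by linarith
  also have "\<dots> = 42 * nx * nh / r^2" by (simp add: field_simps)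
  finally show ?thesis .
qed
lemma pdiff_xi: "pdiff (xi r e) b x = GG r e b x"
  unfolding pdiff_def using frechet_derivative_at[OF xi_deriv[of r e x]] by metis

lemma pdiff_xi_fun: "pdiff (xi r e) b = GG r e b"
  using pdiff_xi by blast

lemma pdiff_GG: "r \<noteq> 0 \<Longrightarrow> pdiff (GG r e b) b x = HH r e b x b"
  unfolding pdiff_def using frechet_derivative_at[OF GG_deriv] by metis

lemma lap_xi: "r \<noteq> 0 \<Longrightarrow> laplacian (xi r e) x = (\<Sum>b\<in>Basis. HH r e b x b)"
  unfolding laplacian_def pdiff_xi_fun by (simp add: pdiff_GG)

lemma qf_ge1: "r > 0 \<Longrightarrow> norm x \<ge> r \<Longrightarrow> qf r x \<ge> 1"
proof -
  assume r: "r > 0" and n: "norm x \<ge> r"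
  have "r^2 \<le> (norm x)^2" using r n by (intro power_mono) auto
  then have "r^2 \<le> x \<bullet> x" by (simp add: power2_norm_eq_inner)
  then show ?thesis unfolding qf_def using r by simp
qed

lemma qf_nonneg: "qf r x \<ge> 0"
  unfolding qf_def by simp

lemma HH_bound:
  fixes x h b e :: "'a::euclidean_space"
  assumes r: "r > 0" and b: "norm b \<le> 1" and e: "norm e \<le> 1"
  shows "\<bar>HH r e b x h\<bar> \<le> 42 * norm x * norm h / r^2 * indicator (ball 0 r) x"
proof (cases "norm x < r")
  case False
  then have "qf r x \<ge> 1" using qf_ge1 r by force
  then show ?thesis using False by (simp add: HH_def phi_zero)
next
  case True
  have nx2: "(norm x)^2 \<le> r^2" using True by (intro power_mono) auto
  have "\<bar>HH r e b x h\<bar> \<le> 42 * norm x * norm h / r^2"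
    unfolding HH_def
  proof (rule real_bound42)
    show "\<bar>b \<bullet> e\<bar> \<le> 1" using b e Cauchy_Schwarz_ineq2[of b e]
      by (smt (verit) mult_le_one norm_ge_zero)
    show "\<bar>x \<bullet> h\<bar> \<le> norm x * norm h" by (rule Cauchy_Schwarz_ineq2)
    show "\<bar>h \<bullet> e\<bar> \<le> norm h" using Cauchy_Schwarz_ineq2[of h e] e
      by (smt (verit) mult_left_le norm_ge_zero)
    show "\<bar>x \<bullet> b\<bar> \<le> norm x" using Cauchy_Schwarz_ineq2[of x b] b
      by (smt (verit) mult_left_le norm_ge_zero)
    show "\<bar>x \<bullet> e\<bar> \<le> norm x" using Cauchy_Schwarz_ineq2[of x e] e
      by (smt (verit) mult_left_le norm_ge_zero)
    show "\<bar>h \<bullet> b\<bar> \<le> norm h" using Cauchy_Schwarz_ineq2[of h b] b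
      by (smt (verit) mult_left_le norm_ge_zero)
    show "\<bar>phi1 (qf r x)\<bar> \<le> 3" using phi_bounds(2)[OF qf_nonneg] .
    show "\<bar>phi2 (qf r x)\<bar> \<le> 6" using phi_bounds(3)[OF qf_nonneg] .
  qed (use nx2 r in auto)
  then show ?thesis using True by simp
qed

lemma lap_bound:
  fixes e :: "'a::euclidean_space"
  assumes r: "r > 0" and e: "e \<in> Basis"
  shows "\<bar>laplacian (xi r e) x\<bar> \<le> real DIM('a) * 42 * norm x / r^2 * indicator (ball 0 r) x"
proof -
  have "\<bar>laplacian (xi r e) x\<bar> \<le> (\<Sum>b\<in>(Basis::'a set). \<bar>HH r e b x b\<bar>)"
    using r by (simp add: lap_xi sum_abs)
  also have "\<dots> \<le> (\<Sum>b\<in>(Basis::'a set). 42 * norm x * 1 / r^2 * indicator (ball 0 r) x)"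
    apply (rule sum_mono)
    using HH_bound[OF r, of _ e x] e by (metis norm_Basis order_refl)
  also have "\<dots> = real DIM('a) * 42 * norm x / r^2 * indicator (ball 0 r) x" by simp
  finally show ?thesis .
qed

lemma xi_bound:
  fixes e :: "'a::euclidean_space"
  assumes r: "r > 0" and e: "e \<in> Basis"
  shows "\<bar>xi r e x\<bar> \<le> norm x * indicator (ball 0 r) x"
proof (cases "norm x < r")
  case False
  then have "qf r x \<ge> 1" using qf_ge1 r by force
  then show ?thesis using False by (simp add: xi_def phi_zero)
next
  case True
  have "\<bar>x \<bullet> e\<bar> \<le> norm x" using Cauchy_Schwarz_ineq2[of x e] e by simp
  moreover have "\<bar>phi0 (qf r x)\<bar> \<le> 1" using phi_bounds(1)[OF qf_nonneg] .
  ultimately have "\<bar>xi r e x\<bar> \<le> norm x * 1" unfolding xi_def by (intro abs_prod_le)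
  then show ?thesis using True by simp
qed

lemma pdiff_xi_0: "e \<in> Basis \<Longrightarrow> pdiff (xi r e) e 0 = 1"
  by (simp add: pdiff_xi GG_def qf_def phi0_def)

lemma C11_xi:
  fixes e :: "'a::euclidean_space"
  assumes r: "r > 0" "r \<le> 1" and e: "e \<in> Basis"
  shows "C11_0_ball (xi r e)"
  unfolding C11_0_ball_def
proof (intro conjI ballI)
  show "continuous_on (cball 0 1) (xi r e)"
    by (intro continuous_at_imp_continuous_on ballI has_derivative_continuous[OF xi_deriv])
  show "xi r e differentiable at x" for x
    using xi_deriv unfolding differentiable_def by blast
  show "xi r e x = 0" if "x \<in> sphere (0::'a) 1" for x
  proof -
    have "norm x \<ge> r" using that r by simp
    then have "qf r x \<ge> 1" using qf_ge1[OF r(1)] by blast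
    then show ?thesis by (simp add: xi_def phi_zero)
  qed
  show "\<exists>L. \<forall>b\<in>Basis. L-lipschitz_on (ball 0 1) (pdiff (xi r e) b)"
  proof (intro exI ballI)
    fix b :: 'a assume b: "b \<in> Basis"
    show "(42 / r)-lipschitz_on (ball 0 1) (pdiff (xi r e) b)"
      unfolding pdiff_xi_fun
    proof (rule lipschitz_onI)
      show "0 \<le> 42 / r" using r by simp
      fix x y :: 'a assume x: "x \<in> ball 0 1" and y: "y \<in> ball 0 1"
      have ob: "onorm (HH r e b z) \<le> 42 / r" for z
      proof (rule onorm_le)
        fix h
        have "\<bar>HH r e b z h\<bar> \<le> 42 * norm z * norm h / r^2 * indicator (ball 0 r) z"
          using HH_bound[OF r(1), of b e z h] b e by simp
        also have "\<dots> \<le> 42 / r * norm h"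
        proof (cases "norm z < r")
          case True
          have "42 * norm z * norm h / r^2 \<le> 42 * r * norm h / r^2"
            using True r by (intro divide_right_mono mult_right_mono) auto
          also have "\<dots> = 42 / r * norm h" using r by (simp add: power2_eq_square field_simps)
          finally show ?thesis using True by simp
        qed (use r in simp)
        finally show "norm (HH r e b z h) \<le> 42 / r * norm h" by simp
      qed
      have "norm (GG r e b x - GG r e b y) \<le> 42 / r * norm (x - y)"
        by (rule differentiable_bound[OF convex_ball _ ob x y])
           (rule has_derivative_at_withinI[OF GG_deriv], use r in simp)
      then show "dist (GG r e b x) (GG r e b y) \<le> 42 / r * dist x y"
        by (simp add: dist_norm)
    qed
  qed
qed
lemma abs_int_bound:
  fixes h R :: "'a::euclidean_space \<Rightarrow> real"
  assumes "integrable lborel R" "\<And>x. \<bar>h x\<bar> \<le> R x"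
  shows "\<bar>\<integral>x. h x \<partial>lborel\<bar> \<le> (\<integral>x. R x \<partial>lborel)"
proof -
  have "\<bar>\<integral>x. h x \<partial>lborel\<bar> \<le> (\<integral>x. norm (h x) \<partial>lborel)"
    using integral_norm_bound[of lborel h] by simp
  also have "\<dots> \<le> (\<integral>x. R x \<partial>lborel)"
    using assms by (intro integral_mono') (auto intro: order_trans[OF abs_ge_zero])
  finally show ?thesis .
qed
lemma young_like:
  fixes p s c y :: real
  assumes p: "p > 1" and s: "s > 0" and c: "c > 0" and y: "y \<ge> 0"
  shows "y / c \<le> s * y powr p + (s * c) powr (- 1 / (p - 1)) / c"
proof -
  define M where "M = (s * c) powr (- 1 / (p - 1))"
  have M0: "M > 0" unfolding M_def using s c by simp
  show ?thesis
  proof (cases "y \<le> M")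
    case True
    then have "y / c \<le> M / c" using c by (simp add: divide_right_mono)
    moreover have "0 \<le> s * y powr p" using s by simp
    ultimately show ?thesis unfolding M_def by linarith
  next
    case False
    then have yM: "y > M" by simp
    then have ypos: "y > 0" using M0 by simp
    have "M powr (p - 1) = (s * c) powr (- 1 / (p - 1) * (p - 1))"
      unfolding M_def by (simp add: powr_powr)
    also have "\<dots> = inverse (s * c)" using p s c by (simp add: powr_minus)
    finally have Mp: "M powr (p - 1) = inverse (s * c)" .
    have "inverse (s * c) \<le> y powr (p - 1)"
      unfolding Mp[symmetric] using yM M0 p by (intro powr_mono2) auto
    then have "s * (inverse (s * c) * y) \<le> s * (y powr (p - 1) * y)"
      using s ypos by (intro mult_left_mono mult_right_mono) auto
    moreover have "s * (inverse (s * c) * y) = y / c" using s c by (simp add: field_simps)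
    moreover have "y powr (p - 1) * y = y powr p"
      using ypos by (simp add: powr_diff)
    ultimately have "y / c \<le> s * y powr p" by simp
    moreover have "0 \<le> (s * c) powr (- 1 / (p - 1)) / c" using c by simp
    ultimately show ?thesis by linarith
  qed
qed
lemma gpow_abs: "\<bar>gpow p y\<bar> = \<bar>y\<bar> powr p"
proof (cases "y = 0")
  case True then show ?thesis by (simp add: gpow_def)
next
  case False
  then have "\<bar>y\<bar> powr (p - 1) * \<bar>y\<bar> = \<bar>y\<bar> powr p"
    by (simp add: powr_diff)
  then show ?thesis by (simp add: gpow_def abs_mult)
qed
lemma measure_ball_le:
  fixes r :: real assumes r: "r > 0"
  shows "measure lborel (ball (0::'a::euclidean_space) r) \<le> (2 * r) ^ DIM('a)"
proof -
  have sub: "ball (0::'a) r \<subseteq> cbox (- (r *\<^sub>R One)) (r *\<^sub>R One)"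
  proof
    fix x :: 'a assume "x \<in> ball 0 r"
    then have "norm x < r" by simp
    then have "\<bar>x \<bullet> b\<bar> \<le> r" if "b \<in> Basis" for b
      using Basis_le_norm[OF that, of x] by simp
    then show "x \<in> cbox (- (r *\<^sub>R One)) (r *\<^sub>R One)"
      unfolding mem_box
    proof (intro ballI conjI)
      fix i :: 'a assume i: "i \<in> Basis"
      have "\<bar>x \<bullet> i\<bar> \<le> r" using i \<open>\<And>b. b \<in> Basis \<Longrightarrow> \<bar>x \<bullet> b\<bar> \<le> r\<close> by blast
      moreover have "One \<bullet> i = (1::real)" using i by simp
      ultimately show "(- (r *\<^sub>R One)) \<bullet> i \<le> x \<bullet> i" "x \<bullet> i \<le> (r *\<^sub>R One) \<bullet> i"
        by (simp_all add: inner_minus_left)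
    qed
  qed
  have "measure lborel (ball (0::'a) r) \<le> measure lborel (cbox (- (r *\<^sub>R One)) (r *\<^sub>R One) :: 'a set)"
    by (rule measure_mono_fmeasurable[OF sub]) auto
  also have "\<dots> = (\<Prod>b\<in>(Basis::'a set). 2 * r)"
  proof -
    have le: "\<And>b. b \<in> (Basis::'a set) \<Longrightarrow> (- (r *\<^sub>R One)) \<bullet> b \<le> (r *\<^sub>R One) \<bullet> b"
      using r by (simp add: inner_minus_left)
    have "measure lborel (cbox (- (r *\<^sub>R One)) (r *\<^sub>R One) :: 'a set)
        = (\<Prod>b\<in>(Basis::'a set). ((r *\<^sub>R One) - (- (r *\<^sub>R One))) \<bullet> b)"
      by (rule measure_lborel_cbox[OF le])
    also have "\<dots> = (\<Prod>b\<in>(Basis::'a set). 2 * r)"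
      by (rule prod.cong) (auto simp: inner_diff_left inner_minus_left inner_add_left)
    finally show ?thesis .
  qed
  also have "\<dots> = (2 * r) ^ DIM('a)" by simp
  finally show ?thesis .
qed
lemma powr_claim:
  fixes r s p :: real and N :: nat
  assumes r: "r > 0" "r \<le> 1" and s: "s > 0" and p: "p > 1"
    and expo: "2 / (p - 1) \<le> real N - 1"
  shows "(s * r^2) powr (- 1 / (p - 1)) / r * (2 * r) ^ N \<le> 2 ^ N * s powr (- 1 / (p - 1))"
proof -
  define a where "a = - 1 / (p - 1)"
  have r2: "r^2 = r powr 2" using r by (simp add: powr_realpow)
  have rN: "r ^ N = r powr (real N)" using r by (simp add: powr_realpow)
  have r1: "r = r powr 1" using r by simp
  have e0: "(s * r^2) powr a = s powr a * (r^2) powr a"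
    using r s by (auto intro: powr_mult)
  have e00: "(r powr 2) powr a = r powr (2 * a)" by (simp only: powr_powr)
  have e1: "(s * r^2) powr a = s powr a * r powr (2 * a)"
  proof -
    have "(r^2) powr a = r powr (2 * a)" by (simp only: r2 e00)
    then show ?thesis by (simp only: e0)
  qed
  have e2: "r powr (2 * a) / r * r ^ N = r powr (2 * a + real N - 1)"
  proof -
    have "r powr (2 * a) * r powr (real N) = r powr (2 * a + real N)" by (simp add: powr_add)
    moreover have "r powr (2 * a + real N) / r powr 1 = r powr (2 * a + real N - 1)"
      by (simp add: powr_diff)
    ultimately show ?thesis using r rN
      by (metis (no_types, lifting) r1 times_divide_eq_left mult.commute)
  qed
  have "(s * r^2) powr a / r * (2 * r) ^ N = 2 ^ N * s powr a * (r powr (2 * a) / r * r ^ N)"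
    unfolding e1 by (simp add: power_mult_distrib)
  also have "\<dots> = 2 ^ N * s powr a * r powr (2 * a + real N - 1)" using e2 by simp
  also have "\<dots> \<le> 2 ^ N * s powr a * 1"
  proof (rule mult_left_mono)
    have "0 \<le> 2 * a + real N - 1" using expo unfolding a_def by (simp add: field_simps)
    then show "r powr (2 * a + real N - 1) \<le> 1" using r by (intro powr_le1) auto
  qed simp
  finally show ?thesis unfolding a_def by simp
qed
theorem theorem1p2:
  fixes p k :: real and eN :: "'a::euclidean_space"
  assumes "DIM('a) \<ge> 2"
    and "eN \<in> Basis"
    and "k > 0"
    and "p \<ge> (real DIM('a) + 1) / (real DIM('a) - 1)"
  shows "\<not> (\<exists>u :: 'a \<Rightarrow> real. xN_odd eN u \<and> very_weak_solution p k eN u)"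
proof
  assume "\<exists>u :: 'a \<Rightarrow> real. xN_odd eN u \<and> very_weak_solution p k eN u"
  then obtain u :: "'a \<Rightarrow> real" where vw: "very_weak_solution p k eN u" by blast
  note e = assms(2)
  have kpos: "k > 0" using assms(3) .
  have N2: "real DIM('a) \<ge> 2" using assms(1) by simp
  have Npos: "real DIM('a) - 1 > 0" using N2 by simp
  have q: "(real DIM('a) + 1) / (real DIM('a) - 1) = 1 + 2 / (real DIM('a) - 1)"
    using Npos by (simp add: field_simps)
  have pge: "p - 1 \<ge> 2 / (real DIM('a) - 1)" using assms(4) q by simp
  have p1: "p > 1" using pge Npos by (smt (verit) divide_pos_pos)
  have expo: "2 / (p - 1) \<le> real DIM('a) - 1"
  proof -
    have "(real DIM('a) - 1) * (2 / (real DIM('a) - 1)) \<le> (real DIM('a) - 1) * (p - 1)"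
      by (rule mult_left_mono[OF pge]) (use Npos in simp)
    moreover have "(real DIM('a) - 1) * (2 / (real DIM('a) - 1)) = 2"
      using Npos by (intro times_divide_eq_right[THEN trans] nonzero_mult_div_cancel_left) auto
    ultimately have "2 \<le> (p - 1) * (real DIM('a) - 1)" by (simp add: mult.commute)
    then show ?thesis using p1 by (simp add: pos_divide_le_eq mult.commute)
  qed
  from vw have intw: "set_integrable lborel (ball 0 1) (\<lambda>x. norm x * gpow p (u x))"
    and eqn: "\<And>\<xi>. C11_0_ball \<xi> \<Longrightarrow>
        ((\<lambda>\<epsilon>. set_lebesgue_integral lborel (ball 0 1 - ball 0 \<epsilon>)
                 (\<lambda>x. u x * (- laplacian \<xi> x) + gpow p (u x) * \<xi> x))
          \<longlongrightarrow> 2 * k * pdiff \<xi> eN 0) (at_right 0)"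
    unfolding very_weak_solution_def by blast+
  define W where "W x = \<bar>indicator (ball 0 1) x * (norm x * gpow p (u x))\<bar>" for x :: 'a
  have intW: "integrable lborel W"
    using intw unfolding set_integrable_def W_def by (intro integrable_abs) simp
  have W0: "W x \<ge> 0" for x unfolding W_def by simp
  define T where "T r = (\<integral>x. indicator (ball (0::'a) r) x * W x \<partial>lborel)" for r :: real
  have intTr: "integrable lborel (\<lambda>x. indicator (ball (0::'a) r) x * W x)" for r
    using integrable_mult_indicator[of "ball 0 r" lborel W] intW by simp
  define K where "K = real DIM('a) * 42"
  have K0: "K > 0" unfolding K_def by simp
  have claim1: "2 * k \<le> (K * s + 1) * T r
      + K * ((s * r^2) powr (- 1 / (p - 1)) / r) * measure lborel (ball (0::'a) r)"
    if r: "0 < r" "r \<le> 1" and s: "0 < s" for r s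
  proof -
    define M where "M = (s * r^2) powr (- 1 / (p - 1))"
    have M0: "M \<ge> 0" unfolding M_def by simp
    define R where "R x = (K * s + 1) * (indicator (ball 0 r) x * W x)
        + (K * M / r) * indicator (ball (0::'a) r) x" for x
    have intInd: "integrable lborel (indicator (ball (0::'a) r) :: 'a \<Rightarrow> real)"
      by (intro integrable_real_indicator emeasure_bounded_finite) auto
    have intR: "integrable lborel R"
    proof -
      have a: "integrable lborel (\<lambda>x. (K * s + 1) * (indicator (ball (0::'a) r) x * W x))"
        using intTr[of r] by simp
      have b: "integrable lborel (\<lambda>x. (K * M / r) * indicator (ball (0::'a) r) x)"
        using intInd by simp
      show ?thesis using Bochner_Integration.integrable_add[OF a b] unfolding R_def[abs_def] .
    qed
    have intRval: "(\<integral>x. R x \<partial>lborel) = (K * s + 1) * T r + (K * M / r) * measure lborel (ball (0::'a) r)"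
      unfolding R_def T_def using intTr intInd by simp
    have R0: "R x \<ge> 0" for x unfolding R_def using K0 s M0 r W0 by simp
    have pw: "\<bar>u x * (- laplacian (xi r eN) x) + gpow p (u x) * xi r eN x\<bar> \<le> R x" for x
    proof (cases "x \<in> ball 0 r")
      case False
      have "\<bar>laplacian (xi r eN) x\<bar> \<le> 0" using lap_bound[OF r(1) e, of x] False by simp
      moreover have "\<bar>xi r eN x\<bar> \<le> 0" using xi_bound[OF r(1) e, of x] False by simp
      ultimately show ?thesis using R0[of x] by simp
    next
      case True
      then have nx: "norm x < r" by simp
      have x1: "x \<in> ball 0 1" using nx r by simp
      have Wx: "W x = norm x * \<bar>u x\<bar> powr p"
        unfolding W_def using x1 by (simp add: abs_mult gpow_abs)
      have lb: "\<bar>laplacian (xi r eN) x\<bar> \<le> K * norm x / r^2"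
        using lap_bound[OF r(1) e, of x] True unfolding K_def by simp
      have xb: "\<bar>xi r eN x\<bar> \<le> norm x" using xi_bound[OF r(1) e, of x] True by simp
      have y: "\<bar>u x\<bar> / r^2 \<le> s * \<bar>u x\<bar> powr p + M / r^2"
        unfolding M_def using young_like[OF p1 s, of "r^2" "\<bar>u x\<bar>"] r by simp
      have nr: "norm x / r^2 \<le> 1 / r"
      proof -
        have "norm x / r^2 \<le> r / r^2" using nx r by (intro divide_right_mono) auto
        also have "\<dots> = 1 / r" using r by (simp add: power2_eq_square)
        finally show ?thesis .
      qed
      have "\<bar>u x * (- laplacian (xi r eN) x) + gpow p (u x) * xi r eN x\<bar>
          \<le> \<bar>u x\<bar> * \<bar>laplacian (xi r eN) x\<bar> + \<bar>u x\<bar> powr p * \<bar>xi r eN x\<bar>"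
        by (metis abs_minus_cancel abs_mult abs_triangle_ineq gpow_abs)
      also have "\<dots> \<le> \<bar>u x\<bar> * (K * norm x / r^2) + \<bar>u x\<bar> powr p * norm x"
        by (intro add_mono mult_left_mono lb xb) auto
      also have "\<bar>u x\<bar> * (K * norm x / r^2) = K * norm x * (\<bar>u x\<bar> / r^2)" by simp
      also have "\<dots> \<le> K * norm x * (s * \<bar>u x\<bar> powr p + M / r^2)"
        using K0 by (intro mult_left_mono y) auto
      also have "\<dots> = K * s * (norm x * \<bar>u x\<bar> powr p) + K * M * (norm x / r^2)"
        by (simp add: algebra_simps)
      also have "\<dots> \<le> K * s * (norm x * \<bar>u x\<bar> powr p) + K * M * (1 / r)"
        using K0 M0 nr by (intro add_left_mono mult_left_mono) auto
      finally have "\<bar>u x * (- laplacian (xi r eN) x) + gpow p (u x) * xi r eN x\<bar>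
          \<le> K * s * (norm x * \<bar>u x\<bar> powr p) + K * M * (1 / r) + norm x * \<bar>u x\<bar> powr p"
        by (simp add: mult.commute)
      also have "\<dots> = R x" unfolding R_def Wx using True by (simp add: algebra_simps)
      finally show ?thesis .
    qed
    have bound: "set_lebesgue_integral lborel (ball 0 1 - ball 0 \<epsilon>)
                 (\<lambda>x. u x * (- laplacian (xi r eN) x) + gpow p (u x) * xi r eN x)
        \<le> (\<integral>x. R x \<partial>lborel)" for \<epsilon>
    proof -
      have "\<bar>set_lebesgue_integral lborel (ball 0 1 - ball 0 \<epsilon>)
                 (\<lambda>x. u x * (- laplacian (xi r eN) x) + gpow p (u x) * xi r eN x)\<bar>
        \<le> (\<integral>x. R x \<partial>lborel)"
        unfolding set_lebesgue_integral_def
      proof (rule abs_int_bound[OF intR])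
        fix x
        show "\<bar>indicator (ball 0 1 - ball 0 \<epsilon>) x *\<^sub>R
              (u x * (- laplacian (xi r eN) x) + gpow p (u x) * xi r eN x)\<bar> \<le> R x"
          using pw[of x] R0[of x] by (cases "x \<in> ball 0 1 - ball 0 \<epsilon>") auto
      qed
      then show ?thesis by simp
    qed
    have lim: "((\<lambda>\<epsilon>. set_lebesgue_integral lborel (ball 0 1 - ball 0 \<epsilon>)
                 (\<lambda>x. u x * (- laplacian (xi r eN) x) + gpow p (u x) * xi r eN x))
          \<longlongrightarrow> 2 * k) (at_right 0)"
      using eqn[OF C11_xi[OF r e]] pdiff_xi_0[OF e] by simp
    have "2 * k \<le> (\<integral>x. R x \<partial>lborel)"
      by (rule tendsto_le[OF trivial_limit_at_right_real tendsto_const lim]) (intro always_eventually allI bound)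
    then show ?thesis unfolding intRval M_def by (simp add: mult.assoc)
  qed
  have Tlim: "(\<lambda>n. T (1 / real (Suc n))) \<longlonglongrightarrow> 0"
  proof -
    define S where "S n x = indicator (ball (0::'a) (1 / real (Suc n))) x * W x" for n x
    have m1: "(\<lambda>x::'a. 0::real) \<in> borel_measurable lborel" by simp
    have m2: "S n \<in> borel_measurable lborel" for n
      using intTr unfolding S_def[abs_def] by blast
    have bnd: "AE x in lborel. norm (S n x) \<le> W x" for n
      using W0 by (auto simp: indicator_def S_def)
    have lim0: "AE x in lborel. (\<lambda>n. S n x) \<longlonglongrightarrow> 0"
      proof (rule AE_I2)
        fix x :: 'a
        show "(\<lambda>n. S n x) \<longlonglongrightarrow> 0"
          unfolding S_def
        proof (cases "x = 0")
          case True
          then have "W x = 0" unfolding W_def by simp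
          then show "(\<lambda>n. indicator (ball (0::'a) (1 / real (Suc n))) x * W x) \<longlonglongrightarrow> 0" by simp
        next
          case False
          then have "norm x > 0" by simp
          then obtain n0 where n0: "inverse (real (Suc n0)) < norm x"
            using reals_Archimedean[of "norm x"] by auto
          have "\<forall>\<^sub>F n in sequentially. indicator (ball (0::'a) (1 / real (Suc n))) x * W x = 0"
            unfolding eventually_sequentially
          proof (intro exI allI impI)
            fix n assume "n0 \<le> n"
            then have "1 / real (Suc n) \<le> inverse (real (Suc n0))"
              by (simp add: divide_inverse inverse_le_iff_le)
            then have "x \<notin> ball 0 (1 / real (Suc n))" using n0 by simp
            then show "indicator (ball (0::'a) (1 / real (Suc n))) x * W x = 0" by simp
          qed
          then show "(\<lambda>n. indicator (ball (0::'a) (1 / real (Suc n))) x * W x) \<longlonglongrightarrow> 0"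
            by (rule tendsto_eventually)
        qed
      qed
    have "(\<lambda>n. integral\<^sup>L lborel (S n)) \<longlonglongrightarrow> integral\<^sup>L lborel (\<lambda>x::'a. 0::real)"
      by (rule Bochner_Integration.integral_dominated_convergence[OF m1 m2 intW lim0 bnd])
    then show ?thesis unfolding T_def S_def by simp
  qed
  define s where "s = (4 * K * 2 ^ DIM('a) / k) powr (p - 1)"
  have a0: "4 * K * 2 ^ DIM('a) / k > 0" using K0 kpos by simp
  have s0: "s > 0" unfolding s_def using a0 K0 kpos by simp
  have spow: "s powr (- 1 / (p - 1)) = k / (4 * K * 2 ^ DIM('a))"
  proof -
    have "s powr (- 1 / (p - 1)) = (4 * K * 2 ^ DIM('a) / k) powr ((p - 1) * (- 1 / (p - 1)))"
      unfolding s_def by (simp only: powr_powr)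
    also have "(p - 1) * (- 1 / (p - 1)) = - 1" using p1 by simp
    also have "(4 * K * 2 ^ DIM('a) / k) powr (- 1) = inverse (4 * K * 2 ^ DIM('a) / k)"
      using a0 K0 kpos by (simp add: powr_minus)
    finally show ?thesis by simp
  qed
  have Ks: "K * s + 1 > 0" using K0 s0 by (simp add: add_pos_pos)
  have "\<forall>\<^sub>F n in sequentially. T (1 / real (Suc n)) < k / (K * s + 1)"
    using order_tendstoD(2)[OF Tlim] Ks kpos by simp
  then obtain N0 where "\<forall>n\<ge>N0. T (1 / real (Suc n)) < k / (K * s + 1)"
    unfolding eventually_sequentially by blast
  then obtain n where Tn: "T (1 / real (Suc n)) < k / (K * s + 1)" by blast
  define r where "r = 1 / real (Suc n)"
  have r0: "r > 0" "r \<le> 1" unfolding r_def by auto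
  have m: "measure lborel (ball (0::'a) r) \<le> (2 * r) ^ DIM('a)"
    by (rule measure_ball_le[OF r0(1)])
  have pc: "(s * r^2) powr (- 1 / (p - 1)) / r * (2 * r) ^ DIM('a) \<le> 2 ^ DIM('a) * s powr (- 1 / (p - 1))"
    by (rule powr_claim[OF r0 s0 p1 expo])
  have "K * ((s * r^2) powr (- 1 / (p - 1)) / r) * measure lborel (ball (0::'a) r)
      \<le> K * ((s * r^2) powr (- 1 / (p - 1)) / r) * (2 * r) ^ DIM('a)"
    using K0 r0 by (intro mult_left_mono m) auto
  also have "\<dots> \<le> K * (2 ^ DIM('a) * s powr (- 1 / (p - 1)))"
  proof -
    have "K * ((s * r^2) powr (- 1 / (p - 1)) / r) * (2 * r) ^ DIM('a)
        = K * ((s * r^2) powr (- 1 / (p - 1)) / r * (2 * r) ^ DIM('a))" by (simp only: mult.assoc)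
    also have "\<dots> \<le> K * (2 ^ DIM('a) * s powr (- 1 / (p - 1)))"
      using K0 pc by (intro mult_left_mono) auto
    finally show ?thesis .
  qed
  also have "\<dots> = k / 4" unfolding spow using K0 by (simp add: field_simps)
  finally have part2: "K * ((s * r^2) powr (- 1 / (p - 1)) / r) * measure lborel (ball (0::'a) r) \<le> k / 4" .
  have part1: "(K * s + 1) * T r < k"
  proof -
    have "(K * s + 1) * T r < (K * s + 1) * (k / (K * s + 1))"
      using Tn Ks unfolding r_def by (intro mult_strict_left_mono) auto
    also have "\<dots> = k" using Ks by simp
    finally show ?thesis .
  qed
  have "2 * k \<le> (K * s + 1) * T r
      + K * ((s * r^2) powr (- 1 / (p - 1)) / r) * measure lborel (ball (0::'a) r)"
    by (rule claim1[OF r0 s0])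
  then show False using part1 part2 kpos by linarith
qed

end
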